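(* Let $-\infty\le a<b\le\infty$, let $\phi:(a,b)\to\mathbb{R}$ be strictly convex and continuously differentiable, and for $x,\theta\in(a,b)$ let $d_\phi(x,\theta)=\phi(x)-\phi(\theta)-\phi'(\theta)(x-\theta)$. Assume there is $\zeta\in(0,\infty]$ such that for every $\theta\in(a,b)$, $$\lim_{x\to a^+}d_\phi(x,\theta)=\lim_{x\to b^-}d_\phi(x,\theta)=\zeta.$$ Let $g:[0,\infty)\to[0,\infty)$ be measurable and consider the continuous Bregman distribution $$p(x\mid\theta)=\frac{1}{C(\theta)}\,\frac{\phi'(x)-\phi'(\theta)}{x-\theta}\,g\big(d_\phi(x,\theta)\big),\qquad x\in(a,b),$$ where $\theta\in(a,b)$ and $0<C(\theta)<\infty$ is the normalizing constant (the ratio is interpreted as a nonnegative function of $x$; its value at $x=\theta$ is irrelevant). Let $f:[0,\infty)\to\mathbb{R}$ be differentiable. If $$\int_0^\infty g(t)\,|f'(t)|\,dt<\infty,$$ then $$\int_a^b p(x\mid\theta)\, f'\big(d_\phi(x,\theta)\big)\,(x-\theta)\,dx=0,$$ i.e. the estimating equation (with the same Bregman divergence $d_\phi$ used for estimation as in the model) holds without any bias-correction term.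
   Context: The parameter is estimated by minimizing $\int p(x)\,f(d_\phi(x,\theta))\,dx$; for a Bregman divergence $d_\phi$ the stationarity condition is the displayed estimating equation, and "unbiased" means it holds at the true parameter of the model. *)

theory Defs
  imports "HOL-Analysis.Analysis"
begin

definition strictly_convex_on :: "real set \<Rightarrow> (real \<Rightarrow> real) \<Rightarrow> bool" where
  "strictly_convex_on S f \<longleftrightarrow>
     (\<forall>x\<in>S. \<forall>y\<in>S. \<forall>u::real. x \<noteq> y \<longrightarrow> 0 < u \<longrightarrow> u < 1 \<longrightarrow>
        f (u * x + (1 - u) * y) < u * f x + (1 - u) * f y)"

definition ereal_ioo :: "ereal \<Rightarrow> ereal \<Rightarrow> real set" where
  "ereal_ioo a b = {x. a < ereal x \<and> ereal x < b}"

definition from_right_of :: "ereal \<Rightarrow> real filter" where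
  "from_right_of a = (if a = -\<infinity> then at_bot else at_right (real_of_ereal a))"

definition from_left_of :: "ereal \<Rightarrow> real filter" where
  "from_left_of b = (if b = \<infinity> then at_top else at_left (real_of_ereal b))"

definition bregman :: "(real \<Rightarrow> real) \<Rightarrow> (real \<Rightarrow> real) \<Rightarrow> real \<Rightarrow> real \<Rightarrow> real" where
  "bregman \<phi> \<phi>' x \<theta> = \<phi> x - \<phi> \<theta> - \<phi>' \<theta> * (x - \<theta>)"

text \<open>Unnormalised continuous Bregman density kernel; the value at x = theta is irrelevant
  (here it is 0 by division by zero).\<close>
definition bregman_kernel ::
  "(real \<Rightarrow> real) \<Rightarrow> (real \<Rightarrow> real) \<Rightarrow> (real \<Rightarrow> real) \<Rightarrow> real \<Rightarrow> real \<Rightarrow> real" where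
  "bregman_kernel \<phi> \<phi>' g \<theta> x = (\<phi>' x - \<phi>' \<theta>) / (x - \<theta>) * g (bregman \<phi> \<phi>' x \<theta>)"

end

theory Submission
  imports Defs
begin

lemma tangent_strict:
  fixes S :: "real set"
  assumes sc: "strictly_convex_on S \<phi>" and cS: "convex S" and oS: "open S"
    and d: "\<And>x. x \<in> S \<Longrightarrow> (\<phi> has_real_derivative \<phi>' x) (at x)"
    and x: "x \<in> S" and y: "y \<in> S" and xy: "x \<noteq> y"
  shows "\<phi> x + \<phi>' x * (y - x) < \<phi> y"
proof -
  have cv: "convex_on S \<phi>"
  proof (rule convex_onI[OF _ cS])
    fix t :: real and x y assume t: "0 < t" "t < 1" and xy: "x \<in> S" "y \<in> S"
    show "\<phi> ((1 - t) *\<^sub>R x + t *\<^sub>R y) \<le> (1 - t) * \<phi> x + t * \<phi> y"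
    proof (cases "x = y")
      case True then show ?thesis by (simp add: algebra_simps)
    next
      case False
      then have "\<forall>u. 0<u \<longrightarrow> u<1 \<longrightarrow> \<phi> (u*x+(1-u)*y) < u*\<phi> x+(1-u)*\<phi> y"
        using sc xy unfolding strictly_convex_on_def by blast
      from this[rule_format, of "1-t"] t show ?thesis by simp
    qed
  qed
  define m where "m = (1/2) * x + (1 - 1/2) * y"
  have mS: "m \<in> S"
  proof -
    have "(1 - 1/2) *\<^sub>R x + (1/2) *\<^sub>R y \<in> S"
      using cS x y unfolding convex_alt by (metis (no_types) field_sum_of_halves half_gt_zero_iff le_add_same_cancel2 less_eq_real_def zero_less_one)
    then show ?thesis unfolding m_def by (simp add: algebra_simps)
  qed
  have lt: "\<phi> m < (1/2) * \<phi> x + (1 - 1/2) * \<phi> y"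
    using sc[unfolded strictly_convex_on_def, rule_format, OF x y xy, of "1/2"] unfolding m_def
    by simp
  have "\<phi>' x * (m - x) \<le> \<phi> m - \<phi> x"
    by (rule convex_on_imp_above_tangent[OF cv])
       (auto simp: interior_open[OF oS] x mS convex_connected[OF cS] has_field_derivative_at_within[OF d[OF x]])
  with lt show ?thesis unfolding m_def by (simp add: algebra_simps)
qed

lemma left_filter:
  assumes "b \<noteq> -\<infinity>"
  shows "from_left_of b \<noteq> bot"
    and "\<And>y. ereal y < b \<Longrightarrow> eventually (\<lambda>z. y < z \<and> ereal z < b) (from_left_of b)"
proof -
  show "from_left_of b \<noteq> bot"
    using assms by (cases b) (auto simp: from_left_of_def)
  fix y assume y: "ereal y < b"
  show "eventually (\<lambda>z. y < z \<and> ereal z < b) (from_left_of b)"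
  proof (cases b)
    case (real r)
    then have "y < r" using y by simp
    then have "eventually (\<lambda>z. y < z \<and> z < r) (at_left r)"
      using eventually_at_left_real[of y r] by (simp add: eventually_mono)
    then show ?thesis using real by (simp add: from_left_of_def)
  next
    case PInf
    then show ?thesis by (simp add: from_left_of_def eventually_gt_at_top)
  next
    case MInf with assms show ?thesis by simp
  qed
qed

lemma right_filter:
  assumes "a \<noteq> \<infinity>"
  shows "from_right_of a \<noteq> bot"
    and "\<And>y. a < ereal y \<Longrightarrow> eventually (\<lambda>z. z < y \<and> a < ereal z) (from_right_of a)"
proof -
  show "from_right_of a \<noteq> bot"
    using assms by (cases a) (auto simp: from_right_of_def)
  fix y assume y: "a < ereal y"
  show "eventually (\<lambda>z. z < y \<and> a < ereal z) (from_right_of a)"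
  proof (cases a)
    case (real r)
    then have "r < y" using y by simp
    then have "eventually (\<lambda>z. z < y \<and> r < z) (at_right r)"
      using eventually_at_right_real[of r y] by (simp add: eventually_mono)
    then show ?thesis using real by (simp add: from_right_of_def)
  next
    case MInf
    then show ?thesis by (auto simp: from_right_of_def eventually_at_bot_dense)
  next
    case PInf with assms show ?thesis by simp
  qed
qed

lemma deriv_meas:
  fixes f f' :: "real \<Rightarrow> real"
  assumes d: "\<And>t. 0 \<le> t \<Longrightarrow> (f has_real_derivative f' t) (at t within {0..})"
  shows "(\<lambda>t. f' (max 0 t)) \<in> borel_measurable borel"
proof -
  define F where "F t = f (max 0 t)" for t
  have cf: "continuous_on {0..} f"
    using d by (metis DERIV_continuous atLeast_iff continuous_on_eq_continuous_within)
  have "continuous_on UNIV F"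
    unfolding F_def
    by (rule continuous_on_compose2[OF cf]) (auto intro!: continuous_intros)
  then have Fm: "F \<in> borel_measurable borel" by (rule borel_measurable_continuous_onI)
  show ?thesis
  proof (rule borel_measurable_LIMSEQ_real)
    fix t :: real
    let ?s = "max 0 t"
    have s0: "0 \<le> ?s" by simp
    have L: "((\<lambda>y. (f y - f ?s) / (y - ?s)) \<longlongrightarrow> f' ?s) (at ?s within {0..})"
      using d[OF s0] by (simp add: has_field_derivative_iff)
    have seq: "filterlim (\<lambda>n::nat. ?s + 1 / Suc n) (at ?s within {0..}) sequentially"
    proof (subst filterlim_at, intro conjI)
      show "\<forall>\<^sub>F n in sequentially. ?s + 1 / real (Suc n) \<in> {0..} \<and> ?s + 1 / real (Suc n) \<noteq> ?s"
        by (auto intro!: always_eventually add_nonneg_nonneg)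
      have "(\<lambda>n. ?s + 1 / real (Suc n)) \<longlonglongrightarrow> ?s + 0"
        by (intro tendsto_intros LIMSEQ_Suc[OF lim_inverse_n'[unfolded inverse_eq_divide]])
      then show "(\<lambda>n. ?s + 1 / real (Suc n)) \<longlonglongrightarrow> ?s" by simp
    qed
    have "(\<lambda>n. (f (?s + 1 / Suc n) - f ?s) / ((?s + 1 / Suc n) - ?s)) \<longlonglongrightarrow> f' ?s"
      using filterlim_compose[OF L seq] by (simp add: o_def)
    moreover have "(f (?s + 1 / Suc n) - f ?s) / ((?s + 1 / Suc n) - ?s)
        = (F (?s + 1 / Suc n) - F ?s) * Suc n" for n
    proof -
      have "0 \<le> ?s + 1 / Suc n" by (intro add_nonneg_nonneg) auto
      then show ?thesis unfolding F_def by (simp add: max_def divide_simps)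
    qed
    ultimately show "(\<lambda>n. (F (max 0 t + 1 / Suc n) - F (max 0 t)) * Suc n) \<longlonglongrightarrow> f' (max 0 t)"
      by simp
  next
    fix n :: nat
    show "(\<lambda>t. (F (max 0 t + 1 / Suc n) - F (max 0 t)) * Suc n) \<in> borel_measurable borel"
      using Fm by measurable
  qed
qed


theorem mainTheorem3:
  fixes a b :: ereal and \<phi> \<phi>' g f f' :: "real \<Rightarrow> real" and \<zeta> :: ereal
    and \<theta> C :: real
  assumes ab: "a < b"
    and sconv: "strictly_convex_on (ereal_ioo a b) \<phi>"
    and deriv: "\<And>x. x \<in> ereal_ioo a b \<Longrightarrow> (\<phi> has_real_derivative \<phi>' x) (at x)"
    and cont: "continuous_on (ereal_ioo a b) \<phi>'"
    and zeta_pos: "0 < \<zeta>"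
    and lim_a: "\<And>t. t \<in> ereal_ioo a b \<Longrightarrow>
                 ((\<lambda>x. ereal (bregman \<phi> \<phi>' x t)) \<longlongrightarrow> \<zeta>) (from_right_of a)"
    and lim_b: "\<And>t. t \<in> ereal_ioo a b \<Longrightarrow>
                 ((\<lambda>x. ereal (bregman \<phi> \<phi>' x t)) \<longlongrightarrow> \<zeta>) (from_left_of b)"
    and g_meas: "g \<in> borel_measurable (restrict_space lborel {0..})"
    and g_nonneg: "\<And>t. 0 \<le> t \<Longrightarrow> 0 \<le> g t"
    and theta: "\<theta> \<in> ereal_ioo a b"
    and C_int: "set_integrable lborel (ereal_ioo a b) (bregman_kernel \<phi> \<phi>' g \<theta>)"
    and C_def: "C = (LINT x:ereal_ioo a b|lborel. bregman_kernel \<phi> \<phi>' g \<theta> x)"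
    and C_pos: "0 < C"
    and f_deriv: "\<And>t. 0 \<le> t \<Longrightarrow> (f has_real_derivative f' t) (at t within {0..})"
    and fin: "(\<integral>\<^sup>+ t\<in>{0..}. ennreal (g t * \<bar>f' t\<bar>) \<partial>lborel) < \<infinity>"
  shows "set_integrable lborel (ereal_ioo a b)
           (\<lambda>x. bregman_kernel \<phi> \<phi>' g \<theta> x / C * f' (bregman \<phi> \<phi>' x \<theta>) * (x - \<theta>))
       \<and> (LINT x:ereal_ioo a b|lborel.
           bregman_kernel \<phi> \<phi>' g \<theta> x / C * f' (bregman \<phi> \<phi>' x \<theta>) * (x - \<theta>)) = 0"
proof -
  define AB where "AB = ereal_ioo a b"
  define D where "D x = bregman \<phi> \<phi>' x \<theta>" for x
  define h where "h x = \<phi>' x - \<phi>' \<theta>" for x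
  define G where "G u = g u * f' u" for u
  define T where "T = {u. 0 < u \<and> ereal u < \<zeta>}"
  define S1 where "S1 = {x \<in> AB. \<theta> < x}"
  define S2 where "S2 = {x \<in> AB. x < \<theta>}"
  define K where "K x = bregman_kernel \<phi> \<phi>' g \<theta> x / C * f' (bregman \<phi> \<phi>' x \<theta>) * (x - \<theta>)" for x
  have AB_eq: "AB = einterval a b" by (simp add: AB_def ereal_ioo_def einterval_def)
  have AB_open: "open AB" and AB_borel: "AB \<in> sets borel" by (simp_all add: AB_eq)
  have AB_iff: "x \<in> AB \<longleftrightarrow> a < ereal x \<and> ereal x < b" for x by (simp add: AB_def ereal_ioo_def)
  have AB_int: "x \<in> AB" if "y \<in> AB" "z \<in> AB" "y \<le> x" "x \<le> z" for x y z
    using that unfolding AB_iff by (meson ereal_less_eq(3) less_le_trans le_less_trans)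
  have ltr1: "a < ereal y" if "a < ereal x" "x < y" for x y
    using that less_trans[of a "ereal x" "ereal y"] by simp
  have ltr2: "ereal x < b" if "ereal y < b" "x < y" for x y
    using that less_trans[of "ereal x" "ereal y" b] by simp
  have AB_conv: "convex AB"
    unfolding is_interval_convex_1[symmetric] is_interval_1 using AB_int by blast
  have th: "\<theta> \<in> AB" using theta by (simp add: AB_def)
  have tang: "\<phi> x + \<phi>' x * (y - x) < \<phi> y" if "x \<in> AB" "y \<in> AB" "x \<noteq> y" for x y
    by (rule tangent_strict[OF sconv[folded AB_def] AB_conv AB_open]) (use that deriv in \<open>auto simp: AB_def\<close>)
  have mono: "\<phi>' x < \<phi>' y" if "x \<in> AB" "y \<in> AB" "x < y" for x y
  proof -
    have "\<phi> x + \<phi>' x * (y - x) < \<phi> y" using tang that by auto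
    moreover have "\<phi> y + \<phi>' y * (x - y) < \<phi> x" using tang that by auto
    ultimately have "0 < (\<phi>' y - \<phi>' x) * (y - x)" by (simp add: algebra_simps)
    then show ?thesis using that by (simp add: zero_less_mult_iff)
  qed
  have D_th: "D \<theta> = 0" by (simp add: D_def bregman_def)
  have D_pos: "0 < D x" if "x \<in> AB" "x \<noteq> \<theta>" for x
    using tang[OF th that(1)] that by (simp add: D_def bregman_def)
  have D_nonneg: "0 \<le> D x" if "x \<in> AB" for x
    using D_pos[OF that] D_th by (cases "x = \<theta>") auto
  have D_inc: "D x < D y" if "x \<in> AB" "y \<in> AB" "\<theta> \<le> x" "x < y" for x y
  proof -
    have t: "\<phi> x + \<phi>' x * (y - x) < \<phi> y" using tang that by auto
    have "\<phi>' \<theta> \<le> \<phi>' x" using mono[OF th that(1)] that by (cases "x = \<theta>") auto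
    then have "\<phi>' \<theta> * (y - x) \<le> \<phi>' x * (y - x)" using that by (intro mult_right_mono) auto
    with t show ?thesis by (simp add: D_def bregman_def algebra_simps)
  qed
  have D_dec: "D x < D y" if "x \<in> AB" "y \<in> AB" "x \<le> \<theta>" "y < x" for x y
  proof -
    have t: "\<phi> x + \<phi>' x * (y - x) < \<phi> y" using tang that by auto
    have "\<phi>' x \<le> \<phi>' \<theta>" using mono[OF that(1) th] that by (cases "x = \<theta>") auto
    then have "\<phi>' \<theta> * (y - x) \<le> \<phi>' x * (y - x)" using that
      by (intro mult_right_mono_neg) auto
    with t show ?thesis by (simp add: D_def bregman_def algebra_simps)
  qed
  have D_deriv: "(D has_real_derivative h x) (at x)" if "x \<in> AB" for x
    unfolding D_def bregman_def h_def
    using deriv[OF that[unfolded AB_def]]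
    by (auto intro!: derivative_eq_intros)
  have D_cont: "continuous_on S D" if "S \<subseteq> AB" for S
    using D_deriv that by (intro continuous_at_imp_continuous_on) (auto intro: DERIV_isCont)
  have b_ne: "b \<noteq> -\<infinity>" and a_ne: "a \<noteq> \<infinity>" using th by (auto simp: AB_iff)
  note LF = left_filter[OF b_ne] and RF = right_filter[OF a_ne]
  have limb: "((\<lambda>x. ereal (D x)) \<longlongrightarrow> \<zeta>) (from_left_of b)"
    using lim_b[OF theta] by (simp add: D_def)
  have lima: "((\<lambda>x. ereal (D x)) \<longlongrightarrow> \<zeta>) (from_right_of a)"
    using lim_a[OF theta] by (simp add: D_def)
  have img1: "D ` S1 = T"
  proof (intro equalityI subsetI)
    fix u assume "u \<in> D ` S1"
    then obtain x where x: "x \<in> AB" "\<theta> < x" and u: "u = D x" by (auto simp: S1_def)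
    have xb: "ereal x < b" using x by (simp add: AB_iff)
    obtain z where z: "x < z" "ereal z < b" using eventually_happens'[OF LF(1) LF(2)[OF xb]] by blast
    have zAB: "z \<in> AB" using x z by (auto simp: AB_iff intro: less_trans)
    have "\<forall>\<^sub>F i in from_left_of b. ereal (D z) \<le> ereal (D i)"
      using LF(2)[OF z(2)]
    proof (rule eventually_mono)
      fix i assume "z < i \<and> ereal i < b"
      then have "i \<in> AB" using zAB by (auto simp: AB_iff intro: less_trans)
      then show "ereal (D z) \<le> ereal (D i)" using D_inc[OF zAB] \<open>z < i \<and> ereal i < b\<close> x z by force
    qed
    then have "ereal (D z) \<le> \<zeta>" by (rule tendsto_lowerbound[OF limb _ LF(1)])
    moreover have "D x < D z" using D_inc[OF x(1) zAB] x z by auto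
    ultimately have "ereal (D x) < \<zeta>"
      using less_le_trans[of "ereal (D x)" "ereal (D z)" \<zeta>] by simp
    then show "u \<in> T" using D_pos[OF x(1)] x u by (auto simp: T_def)
  next
    fix u assume "u \<in> T"
    then have u: "0 < u" "ereal u < \<zeta>" by (auto simp: T_def)
    have "\<forall>\<^sub>F z in from_left_of b. ereal u < ereal (D z) \<and> (\<theta> < z \<and> ereal z < b)"
      using order_tendstoD(1)[OF limb u(2)] LF(2)[of \<theta>] th by (auto simp: AB_iff intro: eventually_conj)
    then obtain z where z: "u < D z" "\<theta> < z" "ereal z < b"
      using eventually_happens'[OF LF(1)] by auto
    have zAB: "z \<in> AB" using th z by (auto simp: AB_iff intro: less_trans)
    have "continuous_on {\<theta>..z} D" using AB_int[OF th zAB] by (intro D_cont) auto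
    then obtain x where x: "\<theta> \<le> x" "x \<le> z" "D x = u"
      using IVT'[of D \<theta> u z] D_th u z by auto
    have "x \<noteq> \<theta>" using x D_th u by auto
    then have "x \<in> S1" using x AB_int[OF th zAB] by (auto simp: S1_def)
    then show "u \<in> D ` S1" using x by auto
  qed
  have img2: "D ` S2 = T"
  proof (intro equalityI subsetI)
    fix u assume "u \<in> D ` S2"
    then obtain x where x: "x \<in> AB" "x < \<theta>" and u: "u = D x" by (auto simp: S2_def)
    have xa: "a < ereal x" using x by (simp add: AB_iff)
    obtain z where z: "z < x" "a < ereal z" using eventually_happens'[OF RF(1) RF(2)[OF xa]] by blast
    have zAB: "z \<in> AB" using x z ltr2 by (auto simp: AB_iff)
    have "\<forall>\<^sub>F i in from_right_of a. ereal (D z) \<le> ereal (D i)"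
      using RF(2)[OF z(2)]
    proof (rule eventually_mono)
      fix i assume "i < z \<and> a < ereal i"
      then have "i \<in> AB" using zAB ltr2 by (auto simp: AB_iff)
      then show "ereal (D z) \<le> ereal (D i)" using D_dec[OF zAB] \<open>i < z \<and> a < ereal i\<close> x z by force
    qed
    then have "ereal (D z) \<le> \<zeta>" by (rule tendsto_lowerbound[OF lima _ RF(1)])
    moreover have "D x < D z" using D_dec[OF x(1) zAB] x z by auto
    ultimately have "ereal (D x) < \<zeta>"
      using less_le_trans[of "ereal (D x)" "ereal (D z)" \<zeta>] by simp
    then show "u \<in> T" using D_pos[OF x(1)] x u by (auto simp: T_def)
  next
    fix u assume "u \<in> T"
    then have u: "0 < u" "ereal u < \<zeta>" by (auto simp: T_def)
    have "\<forall>\<^sub>F z in from_right_of a. ereal u < ereal (D z) \<and> (z < \<theta> \<and> a < ereal z)"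
      using order_tendstoD(1)[OF lima u(2)] RF(2)[of \<theta>] th by (auto simp: AB_iff intro: eventually_conj)
    then obtain z where z: "u < D z" "z < \<theta>" "a < ereal z"
      using eventually_happens'[OF RF(1)] by auto
    have zAB: "z \<in> AB" using th z ltr2 by (auto simp: AB_iff)
    have "continuous_on {z..\<theta>} D" using AB_int[OF zAB th] by (intro D_cont) auto
    then obtain x where x: "z \<le> x" "x \<le> \<theta>" "D x = u"
      using IVT2'[of D \<theta> u z] D_th u z by auto
    have "x \<noteq> \<theta>" using x D_th u by auto
    then have "x \<in> S2" using x AB_int[OF zAB th] by (auto simp: S2_def)
    then show "u \<in> D ` S2" using x by auto
  qed
  have Tsub: "T \<subseteq> {0..}" by (auto simp: T_def)
  have T_borel: "T \<in> sets borel" unfolding T_def by measurable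
  have f0m: "(\<lambda>t. f' (max 0 t)) \<in> borel_measurable borel" by (rule deriv_meas[OF f_deriv])
  have g0m: "(\<lambda>t. g (max 0 t)) \<in> borel_measurable borel"
  proof -
    have "(\<lambda>t::real. max 0 t) \<in> measurable borel (restrict_space lborel {0..})"
      by (intro measurable_restrict_space2) (auto intro!: borel_measurable_continuous_onI continuous_intros)
    from measurable_comp[OF this g_meas] show ?thesis by (simp add: o_def)
  qed
  note [measurable] = f0m g0m
  have int0: "integrable lborel (\<lambda>u. indicator {0..} u *\<^sub>R (g (max 0 u) * f' (max 0 u)))"
  proof (rule integrableI_bounded)
    show "(\<lambda>u. indicator {0..} u *\<^sub>R (g (max 0 u) * f' (max 0 u))) \<in> borel_measurable lborel"
      unfolding measurable_lborel2 by measurable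
    have "ennreal (norm (indicator {0..} u *\<^sub>R (g (max 0 u) * f' (max 0 u))))
        = ennreal (g u * \<bar>f' u\<bar>) * indicator {0..} u" for u :: real
      by (cases "0 \<le> u") (auto simp: abs_mult g_nonneg max_def)
    then have "(\<integral>\<^sup>+ u. ennreal (norm (indicator {0..} u *\<^sub>R (g (max 0 u) * f' (max 0 u)))) \<partial>lborel)
        = (\<integral>\<^sup>+ t\<in>{0..}. ennreal (g t * \<bar>f' t\<bar>) \<partial>lborel)"
      by simp
    with fin show "(\<integral>\<^sup>+ u. ennreal (norm (indicator {0..} u *\<^sub>R (g (max 0 u) * f' (max 0 u)))) \<partial>lborel) < \<infinity>"
      by simp
  qed
  then have "set_integrable lborel {0..} (\<lambda>u. g (max 0 u) * f' (max 0 u))"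
    unfolding set_integrable_def .
  then have "set_integrable lborel T (\<lambda>u. g (max 0 u) * f' (max 0 u))"
    by (rule set_integrable_subset) (use T_borel Tsub in auto)
  then have "set_integrable lebesgue T (\<lambda>u. g (max 0 u) * f' (max 0 u))"
    unfolding set_integrable_def
    by (subst integrable_completion) (use T_borel in \<open>auto simp: measurable_lborel2\<close>)
  then have Gai: "G absolutely_integrable_on T"
    by (rule set_integrable_cong[THEN iffD1, rotated -1]) (auto simp: G_def T_def max_def)
  define I where "I = integral T G"
  have S1_borel: "S1 \<in> sets borel"
  proof -
    have "S1 = AB \<inter> {\<theta><..}" by (auto simp: S1_def)
    then show ?thesis using AB_borel by simp
  qed
  have S2_borel: "S2 \<in> sets borel"
  proof -
    have "S2 = AB \<inter> {..<\<theta>}" by (auto simp: S2_def)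
    then show ?thesis using AB_borel by simp
  qed
  have S1_leb: "S1 \<in> sets lebesgue" and S2_leb: "S2 \<in> sets lebesgue"
    using S1_borel S2_borel by auto
  have inj1: "inj_on D S1"
  proof (rule inj_onI)
    fix x y assume xy: "x \<in> S1" "y \<in> S1" "D x = D y"
    show "x = y"
    proof (rule ccontr)
      assume "x \<noteq> y"
      then consider "x < y" | "y < x" by linarith
      then show False using D_inc xy by (cases) (fastforce simp: S1_def)+
    qed
  qed
  have inj2: "inj_on D S2"
  proof (rule inj_onI)
    fix x y assume xy: "x \<in> S2" "y \<in> S2" "D x = D y"
    show "x = y"
    proof (rule ccontr)
      assume "x \<noteq> y"
      then consider "x < y" | "y < x" by linarith
      then show False using D_dec xy by (cases) (fastforce simp: S2_def)+
    qed
  qed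
  have CV1: "(\<lambda>x. \<bar>h x\<bar> * G (D x)) absolutely_integrable_on S1 \<and> integral S1 (\<lambda>x. \<bar>h x\<bar> * G (D x)) = I"
  proof -
    have "(D has_real_derivative h x) (at x within S1)" if "x \<in> S1" for x
      using that by (auto simp: S1_def intro!: has_field_derivative_at_within[OF D_deriv])
    from has_absolute_integral_change_of_variables_1'[OF S1_leb this inj1, of G I] Gai
    show ?thesis by (simp add: img1 I_def)
  qed
  have CV2: "(\<lambda>x. \<bar>h x\<bar> * G (D x)) absolutely_integrable_on S2 \<and> integral S2 (\<lambda>x. \<bar>h x\<bar> * G (D x)) = I"
  proof -
    have "(D has_real_derivative h x) (at x within S2)" if "x \<in> S2" for x
      using that by (auto simp: S2_def intro!: has_field_derivative_at_within[OF D_deriv])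
    from has_absolute_integral_change_of_variables_1'[OF S2_leb this inj2, of G I] Gai
    show ?thesis by (simp add: img2 I_def)
  qed
  have K_eq: "K x = h x * G (D x) / C" if "x \<in> AB" "x \<noteq> \<theta>" for x
  proof -
    have c: "x - \<theta> \<noteq> 0" using that by simp
    have C0: "C \<noteq> 0" using C_pos by simp
    show ?thesis unfolding K_def bregman_kernel_def h_def G_def D_def
      using c C0 by (simp add: field_simps)
  qed
  have K1: "K x = (1 / C) * (\<bar>h x\<bar> * G (D x))" if "x \<in> S1" for x
  proof -
    have "h x > 0" using mono[OF th] that by (auto simp: S1_def h_def)
    then show ?thesis using K_eq that by (auto simp: S1_def)
  qed
  have K2: "K x = (- 1 / C) * (\<bar>h x\<bar> * G (D x))" if "x \<in> S2" for x
  proof -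
    have "h x < 0" using mono[OF _ th] that by (auto simp: S2_def h_def)
    then show ?thesis using K_eq that by (auto simp: S2_def)
  qed
  have i1: "set_integrable lebesgue S1 (\<lambda>x. \<bar>h x\<bar> * G (D x))"
    and l1: "(LINT x:S1|lebesgue. \<bar>h x\<bar> * G (D x)) = I"
    using CV1 set_lebesgue_integral_eq_integral by auto
  have i2: "set_integrable lebesgue S2 (\<lambda>x. \<bar>h x\<bar> * G (D x))"
    and l2: "(LINT x:S2|lebesgue. \<bar>h x\<bar> * G (D x)) = I"
    using CV2 set_lebesgue_integral_eq_integral by auto
  have KI1: "set_integrable lebesgue S1 K"
    using set_integrable_mult_right[OF i1, of "1/C"] by (rule set_integrable_cong[THEN iffD1, rotated -1]) (auto simp: K1)
  have KI2: "set_integrable lebesgue S2 K"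
    using set_integrable_mult_right[OF i2, of "-1/C"] by (rule set_integrable_cong[THEN iffD1, rotated -1]) (auto simp: K2)
  have KL1: "(LINT x:S1|lebesgue. K x) = I / C"
  proof -
    have "(LINT x:S1|lebesgue. K x) = (LINT x:S1|lebesgue. (1/C) * (\<bar>h x\<bar> * G (D x)))"
      by (rule set_lebesgue_integral_cong) (auto simp: K1 S1_leb)
    also have "\<dots> = I / C" by (simp add: l1)
    finally show ?thesis .
  qed
  have KL2: "(LINT x:S2|lebesgue. K x) = - I / C"
  proof -
    have "(LINT x:S2|lebesgue. K x) = (LINT x:S2|lebesgue. (-1/C) * (\<bar>h x\<bar> * G (D x)))"
      by (rule set_lebesgue_integral_cong) (auto simp: K2 S2_leb)
    also have "\<dots> = (-1/C) * (LINT x:S2|lebesgue. \<bar>h x\<bar> * G (D x))"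
      by (rule set_integral_mult_right)
    also have "\<dots> = - I / C" by (simp add: l2)
    finally show ?thesis .
  qed
  have disj: "S1 \<inter> S2 = {}" by (auto simp: S1_def S2_def)
  have KI12: "set_integrable lebesgue (S1 \<union> S2) K"
    by (rule set_integrable_Un[OF KI1 KI2 S1_leb S2_leb])
  have KL12: "(LINT x:(S1 \<union> S2)|lebesgue. K x) = 0"
    using set_integral_Un[OF disj KI1 KI2] KL1 KL2 by simp
  have K_th: "K \<theta> = 0" by (simp add: K_def)
  have ind_eq: "(\<lambda>x. indicator AB x *\<^sub>R K x) = (\<lambda>x. indicator (S1 \<union> S2) x *\<^sub>R K x)"
  proof
    fix x show "indicator AB x *\<^sub>R K x = indicator (S1 \<union> S2) x *\<^sub>R K x"
      using K_th by (cases "x = \<theta>") (auto simp: S1_def S2_def indicator_def)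
  qed
  have KIAB: "integrable lebesgue (\<lambda>x. indicator AB x *\<^sub>R K x)"
    using KI12 unfolding set_integrable_def ind_eq .
  have KLAB: "integral\<^sup>L lebesgue (\<lambda>x. indicator AB x *\<^sub>R K x) = 0"
    using KL12 unfolding set_lebesgue_integral_def ind_eq .
  have km: "(\<lambda>x. indicator AB x *\<^sub>R bregman_kernel \<phi> \<phi>' g \<theta> x) \<in> borel_measurable borel"
    using borel_measurable_integrable[OF C_int[unfolded set_integrable_def]] by (simp add: AB_def)
  have D0m: "(\<lambda>x. indicator AB x *\<^sub>R D x) \<in> borel_measurable borel"
    by (rule borel_measurable_continuous_on_indicator[OF AB_borel D_cont[OF subset_refl]])
  have fDm: "(\<lambda>x. f' (max 0 (indicator AB x *\<^sub>R D x))) \<in> borel_measurable borel"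
    using measurable_compose[OF D0m f0m] .
  have Km_eq: "(\<lambda>x. indicator AB x *\<^sub>R K x) = (\<lambda>x. (indicator AB x *\<^sub>R bregman_kernel \<phi> \<phi>' g \<theta> x)
       * (f' (max 0 (indicator AB x *\<^sub>R D x)) * (x - \<theta>) / C))"
  proof
    fix x show "indicator AB x *\<^sub>R K x = (indicator AB x *\<^sub>R bregman_kernel \<phi> \<phi>' g \<theta> x)
       * (f' (max 0 (indicator AB x *\<^sub>R D x)) * (x - \<theta>) / C)"
      using D_nonneg[of x] by (cases "x \<in> AB") (auto simp: K_def D_def max_def)
  qed
  have Km: "(\<lambda>x. indicator AB x *\<^sub>R K x) \<in> borel_measurable lborel"
    unfolding Km_eq measurable_lborel2 using km fDm by measurable
  have final1: "set_integrable lborel AB K"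
    unfolding set_integrable_def using KIAB integrable_completion[OF Km] by simp
  have final2: "(LINT x:AB|lborel. K x) = 0"
    unfolding set_lebesgue_integral_def using KLAB integral_completion[OF Km] by simp
  show ?thesis using final1 final2 unfolding K_def AB_def by blast
qed

end
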